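(* Let $p$ be an odd prime, $v\in\mathbb{N}$ and $z\in\mathbb{Z}\setminus\{0,-1\}$. Let $c_v,\tilde c_v$ be defined by $c_0=\tilde c_0=1$ and, for $v\ge1$, $c_v=\frac{1}{z}\sum_{j=1}^{v}e_j^{(2v-1)}c_{v-j}$ and $\tilde c_v=-\frac{1}{z+1}\sum_{j=1}^{v}e_j^{(2v-1)}\tilde c_{v-j}$. If $\gcd(p,z)=1$ then $$\sum_{k=0}^{p-1}(2k+1)^{2v}D_k(z)\equiv c_v\left(\frac{-z}{p}\right)\pmod p,$$ and if $\gcd(p,z+1)=1$ then $$\sum_{k=0}^{p-1}(-1)^k(2k+1)^{2v}D_k(z)\equiv \tilde c_v\left(\frac{z+1}{p}\right)\pmod p.$$
   Context: $D_n(z)=\sum_{k=0}^{n}\binom{n}{k}\binom{n+k}{k}z^k$ (Delannoy polynomials). For $s\in\mathbb{N}$ and $1\le j\le\lfloor (s+1)/2\rfloor$, $e_j^{(s)}=\binom{s}{2j}2^{2j-1}+\binom{s}{2j-1}2^{2j-2}$. $\left(\frac{\cdot}{p}\right)$ is the Legendre symbol. A congruence $a/b\equiv c\pmod p$ with $p\nmid b$ means $a\equiv bc\pmod p$; the denominators of $c_v$ (resp. $\tilde c_v$) at the integer $z$ divide a power of $z$ (resp. $z+1$). *)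

theory Defs
  imports "HOL-Number_Theory.Number_Theory"
begin

definition delannoy :: "nat \<Rightarrow> int \<Rightarrow> int" where
  "delannoy n z = (\<Sum>k = 0..n. int (n choose k) * int ((n + k) choose k) * z ^ k)"

definition e_coeff :: "nat \<Rightarrow> nat \<Rightarrow> int" where
  "e_coeff s j = int (s choose (2*j)) * 2 ^ (2*j - 1) + int (s choose (2*j - 1)) * 2 ^ (2*j - 2)"

fun c_seq :: "int \<Rightarrow> nat \<Rightarrow> rat" where
  "c_seq z v = (if v = 0 then 1 else
     (1 / of_int z) * (\<Sum>j = 1..v. of_int (e_coeff (2*v - 1) j) * c_seq z (v - j)))"

fun ct_seq :: "int \<Rightarrow> nat \<Rightarrow> rat" where
  "ct_seq z v = (if v = 0 then 1 else
     - (1 / of_int (z + 1)) * (\<Sum>j = 1..v. of_int (e_coeff (2*v - 1) j) * ct_seq z (v - j)))"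

declare c_seq.simps[simp del] ct_seq.simps[simp del]

definition rat_cong :: "rat \<Rightarrow> rat \<Rightarrow> int \<Rightarrow> bool" where
  "rat_cong q r m \<longleftrightarrow> (\<exists>a b. \<not> m dvd b \<and> m dvd a \<and> q - r = of_int a / of_int b)"

end

theory Submission
  imports Defs
begin


definition dA :: "nat \<Rightarrow> nat \<Rightarrow> int" where
  "dA n j = int (n choose j) * int ((n+j) choose j)"

lemma dA_real: "real_of_int (dA n j) = pochhammer (real n - real j + 1) (2*j) / (fact j)^2"
proof -
  have 1: "real (n choose j) = pochhammer (real n - real j + 1) j / fact j"
    by (simp add: binomial_gbinomial gbinomial_pochhammer')
  have 2: "real ((n+j) choose j) = pochhammer (real n + 1) j / fact j"
    by (simp add: binomial_gbinomial gbinomial_pochhammer')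
  have 3: "pochhammer (real n - real j + 1) (j + j) = pochhammer (real n - real j + 1) j * pochhammer (real n + 1) j"
    by (simp add: pochhammer_product')
  show ?thesis unfolding dA_def using 1 2 3
    by (simp add: mult_2 power2_eq_square)
qed

lemma dA_coeff: "real (n+2) * dA (n+2) (i+1) = real (2*n+3) * dA (n+1) (i+1) + 2 * real (2*n+3) * dA (n+1) i - real (n+1) * dA n (i+1)"
proof -
  define x where "x = real n - real i"
  define P where "P = pochhammer (x+2) (2*i)"
  define f where "f = (fact i :: real)"
  have f0: "f \<noteq> 0" unfolding f_def by simp
  have fS: "(fact (i+1) :: real)^2 = (i+1)^2 * f^2"
    unfolding f_def by (simp add: power_mult_distrib)
  have e1: "real_of_int (dA n (i+1)) = x*(x+1)*P / ((i+1)^2 * f^2)"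
  proof -
    have a: "real_of_int (dA n (i+1)) = pochhammer x (2+2*i) / (fact (i+1))^2"
      unfolding dA_real x_def by (simp add: algebra_simps)
    have "pochhammer x (2+2*i) = pochhammer x 2 * pochhammer (x+2) (2*i)"
      using pochhammer_product'[of x 2 "2*i"] by simp
    moreover have "pochhammer x 2 = x*(x+1)" by (simp add: numeral_2_eq_2 pochhammer_rec)
    ultimately show ?thesis unfolding a fS P_def by simp
  qed
  have e2: "real_of_int (dA (n+1) (i+1)) = (x+1)*P*(x+2+2*i) / ((i+1)^2 * f^2)"
  proof -
    have a: "real_of_int (dA (n+1) (i+1)) = pochhammer (x+1) (Suc (2*i+1)) / (fact (i+1))^2"
      unfolding dA_real x_def by (simp add: algebra_simps)
    have "pochhammer (x+1) (Suc (2*i+1)) = (x+1) * pochhammer (x+2) (Suc (2*i))"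
      by (simp add: pochhammer_rec algebra_simps)
    moreover have "pochhammer (x+2) (Suc (2*i)) = (x+2+2*i) * P"
      unfolding P_def by (simp add: pochhammer_rec')
    ultimately show ?thesis unfolding a fS by simp
  qed
  have e3: "real_of_int (dA (n+2) (i+1)) = P*(x+2+2*i)*(x+3+2*i) / ((i+1)^2 * f^2)"
  proof -
    have a: "real_of_int (dA (n+2) (i+1)) = pochhammer (x+2) (2*i+2) / (fact (i+1))^2"
      unfolding dA_real x_def by (simp add: algebra_simps)
    have "pochhammer (x+2) (2*i+2) = P * pochhammer (x+2+2*i) 2"
      unfolding P_def using pochhammer_product'[of "x+2" "2*i" 2] by simp
    moreover have "pochhammer (x+2+2*i) 2 = (x+2+2*i)*(x+3+2*i)" by (simp add: numeral_2_eq_2 pochhammer_rec algebra_simps)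
    ultimately show ?thesis unfolding a fS by simp
  qed
  have e4: "real_of_int (dA (n+1) i) = P / f^2"
    unfolding dA_real P_def f_def x_def by (simp add: algebra_simps)
  have n: "real n = x + i" unfolding x_def by simp
  define Q where "Q = P / ((i+1)^2 * f^2)"
  have q1: "real_of_int (dA n (i+1)) = x*(x+1)*Q" unfolding e1 Q_def by simp
  have q2: "real_of_int (dA (n+1) (i+1)) = (x+1)*(x+2+2*i)*Q" unfolding e2 Q_def by simp
  have q3: "real_of_int (dA (n+2) (i+1)) = (x+2+2*i)*(x+3+2*i)*Q" unfolding e3 Q_def by simp
  have q4: "real_of_int (dA (n+1) i) = (i+1)^2*Q" unfolding e4 Q_def using f0 by simp
  show ?thesis unfolding q1 q2 q3 q4 by (simp add: n power2_eq_square algebra_simps)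
qed

lemma dA_coeff_int: "int (n+2) * dA (n+2) (i+1) = int (2*n+3) * dA (n+1) (i+1) + 2 * int (2*n+3) * dA (n+1) i - int (n+1) * dA n (i+1)"
proof -
  have "real_of_int (int (n+2) * dA (n+2) (i+1)) = real_of_int (int (2*n+3) * dA (n+1) (i+1) + 2 * int (2*n+3) * dA (n+1) i - int (n+1) * dA n (i+1))"
    using dA_coeff[of n i] by simp
  then show ?thesis by (simp only: of_int_eq_iff)
qed

lemma dA_zero: "j > n \<Longrightarrow> dA n j = 0" by (simp add: dA_def)
lemma dA_0: "dA n 0 = 1" by (simp add: dA_def)

lemma delannoy_ext: "m \<le> N \<Longrightarrow> delannoy m z = (\<Sum>j\<le>N. dA m j * z^j)"
proof -
  assume "m \<le> N"
  have "delannoy m z = (\<Sum>j\<le>m. dA m j * z^j)" unfolding delannoy_def dA_def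
    by (simp add: atLeast0AtMost)
  also have "\<dots> = (\<Sum>j\<le>N. dA m j * z^j)"
    by (rule sum.mono_neutral_left) (use \<open>m \<le> N\<close> in \<open>auto simp: dA_zero\<close>)
  finally show ?thesis .
qed

lemma delannoy_rec: "int (n+2) * delannoy (n+2) z = (2*z+1) * int (2*n+3) * delannoy (n+1) z - int (n+1) * delannoy n z"
proof -
  define N where "N = n+1"
  have s: "\<And>m. m \<le> n+2 \<Longrightarrow> delannoy m z = 1 + (\<Sum>i\<le>N. dA m (i+1) * z^(i+1))"
  proof -
    fix m assume "m \<le> n+2"
    then have "delannoy m z = (\<Sum>j\<le>Suc N. dA m j * z^j)" using delannoy_ext N_def by simp
    also have "\<dots> = dA m 0 * z^0 + (\<Sum>i\<le>N. dA m (Suc i) * z^(Suc i))" by (rule sum.atMost_Suc_shift)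
    finally show "delannoy m z = 1 + (\<Sum>i\<le>N. dA m (i+1) * z^(i+1))" by (simp add: dA_0)
  qed
  have s0: "delannoy n z = 1 + (\<Sum>i\<le>N. dA n (i+1) * z^(i+1))" by (rule s) simp
  have s1: "delannoy (n+1) z = 1 + (\<Sum>i\<le>N. dA (n+1) (i+1) * z^(i+1))" by (rule s) simp
  have s2: "delannoy (n+2) z = 1 + (\<Sum>i\<le>N. dA (n+2) (i+1) * z^(i+1))" by (rule s) simp
  have zd: "z * delannoy (n+1) z = (\<Sum>i\<le>N. dA (n+1) i * z^(i+1))"
    unfolding N_def by (subst delannoy_ext[of _ "n+1"]) (auto simp: sum_distrib_left algebra_simps)
  have "(2*z+1) * int (2*n+3) * delannoy (n+1) z - int (n+1) * delannoy n z - int (n+2) * delannoy (n+2) z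
     = 2 * int (2*n+3) * (z * delannoy (n+1) z) + int (2*n+3) * delannoy (n+1) z - int (n+1) * delannoy n z - int (n+2) * delannoy (n+2) z"
    by (simp add: algebra_simps)
  also have "\<dots> = (\<Sum>i\<le>N. (int (2*n+3) * dA (n+1) (i+1) + 2 * int (2*n+3) * dA (n+1) i - int (n+1) * dA n (i+1) - int (n+2) * dA (n+2) (i+1)) * z^(i+1))"
    unfolding zd unfolding s0 s1 s2
    by (simp add: algebra_simps sum_distrib_left sum.distrib sum_subtractf)
  also have "\<dots> = 0"
  proof (rule sum.neutral, rule ballI)
    fix i
    have "int (n+2) * dA (n+2) (i+1) = int (2*n+3) * dA (n+1) (i+1) + 2 * int (2*n+3) * dA (n+1) i - int (n+1) * dA n (i+1)"
      by (rule dA_coeff_int)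
    then show "(int (2*n+3) * dA (n+1) (i+1) + 2 * int (2*n+3) * dA (n+1) i - int (n+1) * dA n (i+1) - int (n+2) * dA (n+2) (i+1)) * z^(i+1) = 0"
      by simp
  qed
  finally show ?thesis by simp
qed


lemma sum_pairs: "(\<Sum>i<2*n. f i) = (\<Sum>j<n. f (2*j) + f (2*j+1))" for f :: "nat \<Rightarrow> int"
  by (induction n) (auto simp: algebra_simps)

lemma binom_id:
  fixes u :: int
  shows "(u+1)*(u+2)^(2*m+1) + (u-1)*(u-2)^(2*m+1)
       = 2*u^(2*m+2) + 4*(\<Sum>j=1..m+1. e_coeff (2*(m+1)-1) j * u^(2*(m+1-j)))"
proof -
  define s where "s = 2*m+1"
  define h where "h i = int (s choose i) * u^(s-i) * ((u+1)*2^i + (u-1)*(-2)^i)" for i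
  define A where "A j = 2*4^j * int (s choose (2*j)) * u^(2*(m-j)+2)" for j
  define B where "B j = 4^(j+1) * int (s choose (2*j+1)) * u^(2*(m-j))" for j
  define C where "C j = 2*4^(j+1) * int (s choose (2*j+2)) * u^(2*(m-j))" for j
  have "(u+1)*(u+2)^s + (u-1)*(u-2)^s = (\<Sum>i\<le>s. h i)"
  proof -
    have 1: "(u+2)^s = (\<Sum>i\<le>s. int (s choose i) * 2^i * u^(s-i))"
      using binomial_ring[of 2 u s] by (simp add: add.commute)
    have 2: "(u-2)^s = (\<Sum>i\<le>s. int (s choose i) * (-2)^i * u^(s-i))"
      using binomial_ring[of "-2" u s] by (simp add: add.commute)
    show ?thesis unfolding 1 2 h_def
      by (simp add: sum_distrib_left sum.distrib[symmetric] algebra_simps)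
  qed
  also have "\<dots> = (\<Sum>i<2*(m+1). h i)"
    by (rule sum.cong) (auto simp: s_def)
  also have "\<dots> = (\<Sum>j<m+1. h (2*j) + h (2*j+1))" by (rule sum_pairs)
  also have "\<dots> = (\<Sum>j<m+1. A j + B j)"
  proof (rule sum.cong[OF refl])
    fix j assume "j \<in> {..<m+1}"
    then have j: "j \<le> m" by simp
    have e1: "s - 2*j = 2*(m-j)+1" using j unfolding s_def by simp
    have e2: "s - (2*j+1) = 2*(m-j)" using j unfolding s_def by simp
    have p1: "(2::int)^(2*j) = 4^j" "(-2::int)^(2*j) = 4^j" by (simp_all add: power_mult)
    have p2: "(2::int)^(2*j+1) = 2*4^j" "(-2::int)^(2*j+1) = -2*4^j" by (simp_all add: power_mult)
    have p3: "u^(2*(m-j)+2) = u * u^(2*(m-j)+1)" by simp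
    have "h (2*j) = A j"
      unfolding h_def A_def e1 p1 p3 by (simp add: algebra_simps)
    moreover have "h (2*j+1) = B j"
      unfolding h_def B_def e2 p2 by (simp add: algebra_simps)
    ultimately show "h (2*j) + h (2*j+1) = A j + B j" by simp
  qed
  also have "\<dots> = 2*u^(2*m+2) + (\<Sum>j<m+1. C j + B j)"
  proof -
    have "(\<Sum>j<m+1. A j) = A 0 + (\<Sum>j<m. A (Suc j))" using sum.lessThan_Suc_shift[of A m] by simp
    moreover have "(\<Sum>j<m+1. C j) = (\<Sum>j<m. C j) + C m" by simp
    moreover have "C m = 0" unfolding C_def s_def by (simp add: binomial_eq_0)
    moreover have "A 0 = 2*u^(2*m+2)" unfolding A_def s_def by simp
    moreover have "(\<Sum>j<m. A (Suc j)) = (\<Sum>j<m. C j)"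
    proof (rule sum.cong[OF refl])
      fix j assume "j \<in> {..<m}"
      then have "2*(m - Suc j) + 2 = 2*(m-j)" by simp
      then show "A (Suc j) = C j" unfolding A_def C_def by (simp add: algebra_simps)
    qed
    ultimately show ?thesis by (simp add: sum.distrib)
  qed
  also have "\<dots> = 2*u^(2*m+2) + 4*(\<Sum>j=1..m+1. e_coeff (2*(m+1)-1) j * u^(2*(m+1-j)))"
  proof -
    have "(\<Sum>j=1..m+1. e_coeff (2*(m+1)-1) j * u^(2*(m+1-j))) = (\<Sum>j<m+1. e_coeff s (Suc j) * u^(2*(m+1-Suc j)))"
    proof -
      have "{1..m+1} = {Suc 0..Suc m}" by simp
      then have "(\<Sum>j=1..m+1. e_coeff s j * u^(2*(m+1-j))) = (\<Sum>j=0..m. e_coeff s (Suc j) * u^(2*(m+1-Suc j)))"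
        using sum.shift_bounds_cl_Suc_ivl[of "\<lambda>j. e_coeff s j * u^(2*(m+1-j))" 0 m] by simp
      also have "{0..m} = {..<m+1}" by auto
      finally show ?thesis unfolding s_def by simp
    qed
    also have "\<dots> = (\<Sum>j<m+1. (C j + B j) div 4)"
    proof (rule sum.cong[OF refl])
      fix j assume "j \<in> {..<m+1}"
      have q: "(2::int)^(2*Suc j - 1) = 2*4^j" "(2::int)^(2*Suc j - 2) = 4^j" "2*Suc j - 1 = 2*j+1"
        by (simp_all add: power_mult)
      have q4: "(4::int)^j = (2^j)^2" by (induction j) (simp_all add: power2_eq_square)
      have "C j + B j = 4 * (e_coeff s (Suc j) * u^(2*(m+1-Suc j)))"
        unfolding C_def B_def e_coeff_def q by (simp add: q4 add: power_add power_mult algebra_simps)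
      then show "e_coeff s (Suc j) * u^(2*(m+1-Suc j)) = (C j + B j) div 4" by simp
    qed
    finally have *: "(\<Sum>j=1..m+1. e_coeff (2*(m+1)-1) j * u^(2*(m+1-j))) = (\<Sum>j<m+1. (C j + B j) div 4)" .
    have "(\<Sum>j<m+1. C j + B j) = 4 * (\<Sum>j<m+1. (C j + B j) div 4)"
      unfolding sum_distrib_left
    proof (rule sum.cong[OF refl])
      fix j
      have "C j + B j = 4 * (int (s choose (2*j+2)) * 2 * 4^j * u^(2*(m-j)) + int (s choose (2*j+1)) * 4^j * u^(2*(m-j)))"
        unfolding C_def B_def by (simp add: algebra_simps)
      then show "C j + B j = 4 * ((C j + B j) div 4)" by simp
    qed
    then show ?thesis using * by simp
  qed
  finally show ?thesis unfolding s_def by simp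
qed


lemma delannoy_rec': "int (n+1) * delannoy (n+1) z = (2*z+1) * int (2*n+1) * delannoy n z - int n * delannoy (n-1) z"
proof (cases n)
  case 0
  then show ?thesis by (simp add: delannoy_def)
next
  case (Suc m)
  then show ?thesis using delannoy_rec[of m z] by (simp add: algebra_simps)
qed

lemma tele:
  fixes w :: "int \<Rightarrow> int"
  shows "(\<Sum>k<n. delannoy k z * (int k * w (int k - 1) + (int k + 1) * w (int k + 1) - (2*z+1)*(2*int k+1)*w (int k)))
       = int n * (w (int n) * delannoy (n-1) z - w (int n - 1) * delannoy n z)"
proof (induction n)
  case 0
  then show ?case by simp
next
  case (Suc n)
  have r: "int (n+1) * delannoy (n+1) z = (2*z+1) * int (2*n+1) * delannoy n z - int n * delannoy (n-1) z"
    by (rule delannoy_rec')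
  have "int n * (w (int n) * delannoy (n-1) z - w (int n - 1) * delannoy n z)
      + delannoy n z * (int n * w (int n - 1) + (int n + 1) * w (int n + 1) - (2*z+1)*(2*int n+1)*w (int n))
      - int (Suc n) * (w (int (Suc n)) * delannoy (Suc n - 1) z - w (int (Suc n) - 1) * delannoy (Suc n) z)
      = w (int n) * (int (n+1) * delannoy (n+1) z - ((2*z+1) * int (2*n+1) * delannoy n z - int n * delannoy (n-1) z))"
    by (simp add: algebra_simps)
  also have "\<dots> = 0" using r by simp
  finally show ?case using Suc.IH by simp
qed

definition S :: "int \<Rightarrow> nat \<Rightarrow> nat \<Rightarrow> int" where
  "S z v n = (\<Sum>k<n. (2*int k+1)^(2*v) * delannoy k z)"

lemma pointwise:
  fixes k :: int
  assumes "v \<ge> 1"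
  shows "k * (2*(k-1)+1)^(2*v-1) + (k+1) * (2*(k+1)+1)^(2*v-1) - (2*z+1)*(2*k+1)*(2*k+1)^(2*v-1)
       = 2*(\<Sum>j=1..v. e_coeff (2*v-1) j * (2*k+1)^(2*(v-j))) - 2*z*(2*k+1)^(2*v)"
proof -
  obtain m where m: "v = m+1" using assms by (metis add.commute le_add_diff_inverse)
  define u where "u = 2*k+1"
  have b: "(u+1)*(u+2)^(2*m+1) + (u-1)*(u-2)^(2*m+1)
       = 2*u^(2*m+2) + 4*(\<Sum>j=1..m+1. e_coeff (2*(m+1)-1) j * u^(2*(m+1-j)))" by (rule binom_id)
  have e: "2*v - 1 = 2*m+1" "2*v = 2*m+2" using m by auto
  have 1: "2*(k-1)+1 = u-2" "2*(k+1)+1 = u+2" "u+1 = 2*(k+1)" "u-1 = 2*k" unfolding u_def by auto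
  have 2: "(2*k+1)*(2*k+1)^(2*m+1) = u^(2*m+2)" unfolding u_def by simp
  show ?thesis unfolding e 1 m using b 2 unfolding u_def[symmetric] 1
    by (simp add: algebra_simps)
qed

lemma S_rec:
  assumes "v \<ge> 1"
  shows "2*((\<Sum>j=1..v. e_coeff (2*v-1) j * S z (v-j) n) - z * S z v n)
       = int n * ((2*int n+1)^(2*v-1) * delannoy (n-1) z - (2*(int n - 1)+1)^(2*v-1) * delannoy n z)"
proof -
  let ?w = "\<lambda>t::int. (2*t+1)^(2*v-1)"
  have "int n * (?w (int n) * delannoy (n-1) z - ?w (int n - 1) * delannoy n z)
     = (\<Sum>k<n. delannoy k z * (int k * ?w (int k - 1) + (int k + 1) * ?w (int k + 1) - (2*z+1)*(2*int k+1)*?w (int k)))"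
    by (rule tele[symmetric])
  also have "\<dots> = (\<Sum>k<n. delannoy k z * (2*(\<Sum>j=1..v. e_coeff (2*v-1) j * (2*int k+1)^(2*(v-j))) - 2*z*(2*int k+1)^(2*v)))"
    using pointwise[OF assms] by simp
  also have "\<dots> = 2*((\<Sum>j=1..v. e_coeff (2*v-1) j * S z (v-j) n) - z * S z v n)"
    unfolding S_def
    apply (simp add: sum_distrib_left sum_distrib_right sum_subtractf right_diff_distrib algebra_simps)
    by (rule sum.swap)
  finally show ?thesis by simp
qed



lemma dA_choose: "dA k j = int ((2*j) choose j) * int ((k+j) choose (2*j))"
proof -
  have 1: "real ((k+j) choose (2*j)) = pochhammer (real k - real j + 1) (2*j) / fact (2*j)"
    by (simp add: binomial_gbinomial gbinomial_pochhammer' algebra_simps)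
  have 2: "real ((2*j) choose j) = fact (2*j) / (fact j)^2"
    by (simp add: binomial_fact mult_2 power2_eq_square)
  have "real_of_int (dA k j) = real_of_int (int ((2*j) choose j) * int ((k+j) choose (2*j)))"
    unfolding dA_real using 1 2 by simp
  then show ?thesis by (simp only: of_int_eq_iff)
qed

lemma hockey: "(\<Sum>k<n. (k+j) choose (2*j)) = (n+j) choose (2*j+1)"
  by (induction n) (simp_all add: binomial_eq_0)

lemma p_dvd_choose:
  assumes "prime p" "k \<le> n" "p \<le> n" "k < p" "n - k < p"
  shows "p dvd (n choose k)"
proof -
  have "fact k * fact (n - k) * (n choose k) = (fact n :: nat)" by (rule binomial_fact_lemma[OF assms(2)])
  moreover have "p dvd (fact n :: nat)" using assms by (simp add: prime_dvd_fact_iff)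
  ultimately have "p dvd fact k * fact (n - k) * (n choose k)" by simp
  moreover have "\<not> p dvd (fact k :: nat)" "\<not> p dvd (fact (n-k) :: nat)" using assms by (simp_all add: prime_dvd_fact_iff)
  ultimately show ?thesis using assms(1) by (simp add: prime_dvd_mult_iff)
qed

lemma choose_pm1:
  assumes "prime p" "k \<le> p - 1"
  shows "[int ((p-1) choose k) = (-1)^k] (mod int p)"
  using assms(2)
proof (induction k)
  case 0
  then show ?case by simp
next
  case (Suc k)
  have p1: "p = Suc (p-1)" using assms(1) prime_gt_0_nat by simp
  have "p choose Suc k = ((p-1) choose k) + ((p-1) choose Suc k)"
    by (subst p1) (rule binomial_Suc_Suc)
  moreover have "p dvd (p choose Suc k)"
    using Suc.prems assms(1) by (intro p_dvd_choose) auto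
  ultimately have "int p dvd int ((p-1) choose k) + int ((p-1) choose Suc k)"
    by (metis int_dvd_int_iff of_nat_add)
  then have "[int ((p-1) choose Suc k) = - int ((p-1) choose k)] (mod int p)"
    by (simp add: cong_iff_dvd_diff add.commute)
  moreover have "[- int ((p-1) choose k) = - ((-1)^k)] (mod int p)"
    using Suc.IH Suc.prems by (simp add: cong_minus_minus_iff)
  ultimately have "[int ((p-1) choose Suc k) = - ((-1)^k)] (mod int p)" by (rule cong_trans)
  then show ?case by simp
qed

lemma choose_p_plus:
  assumes "prime p" "h < p"
  shows "[int ((p+h) choose h) = 1] (mod int p)"
proof -
  have "(p+h) choose h = (\<Sum>i\<le>h. (p choose i) * (h choose (h - i)))"
    by (rule vandermonde[symmetric])
  also have "\<dots> = (p choose 0) * (h choose h) + (\<Sum>i\<in>{1..h}. (p choose i) * (h choose (h - i)))"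
  proof -
    have "{..h} = insert 0 {1..h}" by auto
    then show ?thesis by simp
  qed
  finally have e: "(p+h) choose h = 1 + (\<Sum>i\<in>{1..h}. (p choose i) * (h choose (h - i)))" by simp
  have "p dvd (\<Sum>i\<in>{1..h}. (p choose i) * (h choose (h - i)))"
    using assms by (intro dvd_sum dvd_mult2 p_dvd_choose) auto
  then have "int p dvd int (\<Sum>i\<in>{1..h}. (p choose i) * (h choose (h - i)))"
    by (simp only: int_dvd_int_iff)
  then show ?thesis unfolding e by (simp add: cong_iff_dvd_diff)
qed

lemma S0_cong:
  assumes "prime p" "odd p"
  shows "[S z 0 p = (-z)^((p-1) div 2)] (mod int p)"
proof -
  define h where "h = (p-1) div 2"
  have p: "p = 2*h+1" using assms(2) unfolding h_def by simp
  define T where "T j = z^j * int ((2*j) choose j) * int ((p+j) choose (2*j+1))" for j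
  have "S z 0 p = (\<Sum>k<p. \<Sum>j\<le>p-1. dA k j * z^j)"
    unfolding S_def by (intro sum.cong refl) (auto intro!: delannoy_ext)
  also have "\<dots> = (\<Sum>j\<le>p-1. \<Sum>k<p. dA k j * z^j)" by (rule sum.swap)
  also have "\<dots> = (\<Sum>j\<le>p-1. T j)"
  proof (rule sum.cong[OF refl])
    fix j
    have "(\<Sum>k<p. dA k j * z^j) = z^j * int ((2*j) choose j) * int (\<Sum>k<p. (k+j) choose (2*j))"
      by (simp add: dA_choose sum_distrib_left algebra_simps)
    then show "(\<Sum>k<p. dA k j * z^j) = T j" unfolding T_def hockey .
  qed
  also have "\<dots> = T h + (\<Sum>j\<in>{..p-1} - {h}. T j)"
    by (rule sum.remove) (auto simp: p)
  finally have e: "S z 0 p = T h + (\<Sum>j\<in>{..p-1} - {h}. T j)" .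
  have d: "int p dvd (\<Sum>j\<in>{..p-1} - {h}. T j)"
  proof (rule dvd_sum)
    fix j assume j: "j \<in> {..p-1} - {h}"
    show "int p dvd T j"
    proof (cases "j < h")
      case True
      have "p dvd ((p+j) choose (2*j+1))"
        using True assms(1) by (intro p_dvd_choose) (auto simp: p)
      then show ?thesis unfolding T_def by (simp add: int_dvd_int_iff[symmetric] del: int_dvd_int_iff)
    next
      case False
      then have "h < j" "j \<le> p - 1" using j by auto
      then have "p dvd ((2*j) choose j)"
        using assms(1) by (intro p_dvd_choose) (auto simp: p)
      then show ?thesis unfolding T_def
        by (metis dvd_mult2 dvd_mult int_dvd_int_iff mult.assoc)
    qed
  qed
  have th: "[T h = z^h * (-1)^h * 1] (mod int p)"
  proof -
    have 1: "(2*h) choose h = (p-1) choose h" using p by simp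
    have 2: "(p+h) choose (2*h+1) = (p+h) choose h"
      using binomial_symmetric[of p "p+h"] p by simp
    have "[int ((p-1) choose h) = (-1)^h] (mod int p)" by (rule choose_pm1[OF assms(1)]) (use p in simp)
    moreover have "[int ((p+h) choose h) = 1] (mod int p)" by (rule choose_p_plus[OF assms(1)]) (use p in simp)
    ultimately show ?thesis unfolding T_def 1 2 by (intro cong_mult cong_refl)
  qed
  have "[S z 0 p = z^h * (-1)^h * 1 + 0] (mod int p)"
    unfolding e using th d by (intro cong_add) (simp_all add: cong_0_iff)
  then show ?thesis unfolding h_def[symmetric] by (simp add: power_mult_distrib[symmetric] mult.commute)
qed



fun N :: "int \<Rightarrow> nat \<Rightarrow> int" where
  "N z v = (if v = 0 then 1 else (\<Sum>j=1..v. e_coeff (2*v-1) j * z^(j-1) * N z (v-j)))"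

declare N.simps[simp del]

lemma N_c:
  assumes "z \<noteq> 0"
  shows "(of_int (N z v) :: rat) = of_int z ^ v * c_seq z v"
proof (induction v rule: less_induct)
  case (less v)
  show ?case
  proof (cases "v = 0")
    case True
    then show ?thesis by (simp add: N.simps c_seq.simps)
  next
    case False
    have "of_int z ^ v * c_seq z v = of_int z ^ (v-1) * (\<Sum>j=1..v. of_int (e_coeff (2*v-1) j) * c_seq z (v - j))"
    proof -
      have "of_int z ^ v = (of_int z :: rat) * of_int z ^ (v-1)" using False by (metis power_eq_if)
      then show ?thesis using False assms by (subst c_seq.simps) simp
    qed
    also have "\<dots> = (\<Sum>j=1..v. of_int (e_coeff (2*v-1) j) * of_int z^(j-1) * (of_int z^(v-j) * c_seq z (v - j)))"
      unfolding sum_distrib_left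
    proof (rule sum.cong[OF refl])
      fix j assume "j \<in> {1..v}"
      then have "v - 1 = (j-1) + (v-j)" by auto
      then have "(of_int z :: rat)^(v-1) = of_int z^(j-1) * of_int z^(v-j)" by (simp add: power_add)
      then show "of_int z ^ (v-1) * (of_int (e_coeff (2*v-1) j) * c_seq z (v - j)) = of_int (e_coeff (2*v-1) j) * of_int z^(j-1) * (of_int z^(v-j) * c_seq z (v - j))"
        by simp
    qed
    also have "\<dots> = (\<Sum>j=1..v. of_int (e_coeff (2*v-1) j) * of_int z^(j-1) * of_int (N z (v-j)))"
      by (intro sum.cong refl) (use less False in auto)
    also have "\<dots> = of_int (N z v)" using False by (subst (2) N.simps) simp
    finally show ?thesis by simp
  qed
qed

lemma S_cong:
  assumes "prime p" "odd p"
  shows "[z^v * S z v p = N z v * S z 0 p] (mod int p)"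
proof (induction v rule: less_induct)
  case (less v)
  show ?case
  proof (cases "v = 0")
    case True
    then show ?thesis by (simp add: N.simps)
  next
    case False
    then have v1: "v \<ge> 1" by simp
    have "int p dvd 2 * ((\<Sum>j=1..v. e_coeff (2*v-1) j * S z (v-j) p) - z * S z v p)"
      unfolding S_rec[OF v1] by simp
    moreover have c2: "coprime (int p) 2"
    proof -
      have "coprime p 2" using assms(2) by simp
      then have "coprime (int p) (int 2)" by (simp only: coprime_int_iff)
      then show ?thesis by simp
    qed
    ultimately have "int p dvd ((\<Sum>j=1..v. e_coeff (2*v-1) j * S z (v-j) p) - z * S z v p)"
      using coprime_dvd_mult_right_iff[OF c2] by (simp only:)
    then have zs: "[z * S z v p = (\<Sum>j=1..v. e_coeff (2*v-1) j * S z (v-j) p)] (mod int p)"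
      by (subst cong_sym_eq) (simp add: cong_iff_dvd_diff)
    have "z^v * S z v p = z^(v-1) * (z * S z v p)"
    proof -
      obtain w where "v = Suc w" using False by (cases v) auto
      then show ?thesis by simp
    qed
    also have "[\<dots> = z^(v-1) * (\<Sum>j=1..v. e_coeff (2*v-1) j * S z (v-j) p)] (mod int p)"
      by (intro cong_mult cong_refl zs)
    also have "z^(v-1) * (\<Sum>j=1..v. e_coeff (2*v-1) j * S z (v-j) p)
        = (\<Sum>j=1..v. e_coeff (2*v-1) j * z^(j-1) * (z^(v-j) * S z (v-j) p))"
      unfolding sum_distrib_left
    proof (rule sum.cong[OF refl])
      fix j assume "j \<in> {1..v}"
      then have "v - 1 = (j-1) + (v-j)" by auto
      then have "z^(v-1) = z^(j-1) * z^(v-j)" by (simp add: power_add)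
      then show "z^(v-1) * (e_coeff (2*v-1) j * S z (v-j) p) = e_coeff (2*v-1) j * z^(j-1) * (z^(v-j) * S z (v-j) p)"
        by simp
    qed
    also have "[\<dots> = (\<Sum>j=1..v. e_coeff (2*v-1) j * z^(j-1) * (N z (v-j) * S z 0 p))] (mod int p)"
      by (intro cong_sum cong_mult cong_refl less.IH) (use False in auto)
    also have "(\<Sum>j=1..v. e_coeff (2*v-1) j * z^(j-1) * (N z (v-j) * S z 0 p)) = N z v * S z 0 p"
      using False by (subst (2) N.simps) (simp add: sum_distrib_left algebra_simps)
    finally show ?thesis .
  qed
qed

lemma part1:
  fixes p :: nat and v :: nat and z :: int
  assumes "prime p" "odd p" "z \<noteq> 0" "coprime (int p) z"
  shows "rat_cong (of_int (\<Sum>k = 0..p - 1. (2 * int k + 1) ^ (2 * v) * delannoy k z))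
                     (c_seq z v * of_int (Legendre (- z) (int p))) (int p)"
proof -
  have p0: "p > 0" using assms(1) prime_gt_0_nat by blast
  have sum: "(\<Sum>k = 0..p - 1. (2 * int k + 1) ^ (2 * v) * delannoy k z) = S z v p"
    unfolding S_def using p0 by (intro sum.cong) auto
  define L where "L = Legendre (- z) (int p)"
  have p2: "2 < p" using prime_ge_2_nat[OF assms(1)] assms(2) by (cases "p = 2") auto
  have eu: "[L = (-z)^((p - 1) div 2)] (mod int p)"
    unfolding L_def by (rule euler_criterion[OF assms(1) p2])
  have eL: "[S z 0 p = L] (mod int p)"
    by (rule cong_trans[OF S0_cong[OF assms(1,2), of z] cong_sym[OF eu]])
  have "[N z v * S z 0 p = N z v * L] (mod int p)" by (rule cong_mult[OF cong_refl eL])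
  then have "[z^v * S z v p = N z v * L] (mod int p)"
    using S_cong[OF assms(1,2), of z v] by (rule cong_trans[rotated])
  then have da: "int p dvd (z^v * S z v p - N z v * L)" by (simp add: cong_iff_dvd_diff)
  have db: "\<not> int p dvd z^v"
  proof
    assume "int p dvd z^v"
    moreover have pi: "prime (int p)" using assms(1) by simp
    ultimately have "int p dvd z" using prime_dvd_power[OF pi] by blast
    then have "is_unit (int p)" using coprime_common_divisor[OF assms(4) dvd_refl] by blast
    then show False using pi not_prime_unit by blast
  qed
  have "(of_int (S z v p) :: rat) - c_seq z v * of_int L = of_int (z^v * S z v p - N z v * L) / of_int (z^v)"
    using N_c[OF assms(3), of v] assms(3) by (simp add: field_simps)
  then show ?thesis unfolding rat_cong_def sum L_def[symmetric] using da db by blast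
qed

lemma delannoy_neg_pair: "delannoy n (-1-z) = (-1)^n * delannoy n z \<and> delannoy (n+1) (-1-z) = (-1)^(n+1) * delannoy (n+1) z"
proof (induction n)
  case 0
  then show ?case by (simp add: delannoy_def)
next
  case (Suc n)
  have r1: "int (n+2) * delannoy (n+2) (-1-z) = (2*(-1-z)+1) * int (2*n+3) * delannoy (n+1) (-1-z) - int (n+1) * delannoy n (-1-z)"
    by (rule delannoy_rec)
  have r2: "int (n+2) * delannoy (n+2) z = (2*z+1) * int (2*n+3) * delannoy (n+1) z - int (n+1) * delannoy n z"
    by (rule delannoy_rec)
  have "int (n+2) * delannoy (n+2) (-1-z) = int (n+2) * ((-1)^(n+2) * delannoy (n+2) z)"
    unfolding r1 mult.left_commute[of "int (n+2)"] r2 using Suc.IH by (simp add: algebra_simps)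
  then have "delannoy (n+2) (-1-z) = (-1)^(n+2) * delannoy (n+2) z" by simp
  then show ?case using Suc.IH by simp
qed

lemma delannoy_neg: "delannoy n (-1-z) = (-1)^n * delannoy n z"
  using delannoy_neg_pair by blast

lemma ct_c: "ct_seq z v = c_seq (-1-z) v"
proof (induction v rule: less_induct)
  case (less v)
  show ?case
  proof (cases "v = 0")
    case True
    then show ?thesis by (simp add: c_seq.simps ct_seq.simps)
  next
    case False
    have h: "(-1 - rat_of_int z) = - (rat_of_int z + 1)" by simp
    have s: "(\<Sum>j=1..v. of_int (e_coeff (2*v-1) j) * ct_seq z (v-j)) = (\<Sum>j=1..v. of_int (e_coeff (2*v-1) j) * c_seq (-1-z) (v-j))"
      by (intro sum.cong refl) (use less False in auto)
    have a: "ct_seq z v = - (1 / of_int (z+1)) * (\<Sum>j=1..v. of_int (e_coeff (2*v-1) j) * ct_seq z (v-j))"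
      using False by (subst ct_seq.simps) simp
    have b: "c_seq (-1-z) v = (1 / of_int (-1-z)) * (\<Sum>j=1..v. of_int (e_coeff (2*v-1) j) * c_seq (-1-z) (v-j))"
      using False by (subst c_seq.simps) simp
    have o: "(of_int (-1-z) :: rat) = - of_int (z+1)" by simp
    show ?thesis unfolding a b s o divide_minus_right by (rule refl)
  qed
qed

theorem theorem1p2:
  fixes p :: nat and v :: nat and z :: int
  assumes "prime p" and "odd p" and "z \<noteq> 0" and "z \<noteq> -1"
  shows "(coprime (int p) z \<longrightarrow>
            rat_cong (of_int (\<Sum>k = 0..p - 1. (2 * int k + 1) ^ (2 * v) * delannoy k z))
                     (c_seq z v * of_int (Legendre (- z) (int p))) (int p))
       \<and> (coprime (int p) (z + 1) \<longrightarrow>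
            rat_cong (of_int (\<Sum>k = 0..p - 1. (-1) ^ k * (2 * int k + 1) ^ (2 * v) * delannoy k z))
                     (ct_seq z v * of_int (Legendre (z + 1) (int p))) (int p))"
proof (intro conjI impI)
  assume "coprime (int p) z"
  then show "rat_cong (of_int (\<Sum>k = 0..p - 1. (2 * int k + 1) ^ (2 * v) * delannoy k z))
                     (c_seq z v * of_int (Legendre (- z) (int p))) (int p)"
    using part1 assms by blast
next
  assume c: "coprime (int p) (z + 1)"
  have c': "coprime (int p) (-1-z)"
  proof -
    have "coprime (int p) (-(z+1))" using c by (simp only: coprime_minus_right_iff)
    then show ?thesis by (simp add: algebra_simps)
  qed
  have z': "-1-z \<noteq> 0" using assms(4) by simp
  have A: "rat_cong (of_int (\<Sum>k = 0..p - 1. (2 * int k + 1) ^ (2 * v) * delannoy k (-1-z)))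
                     (c_seq (-1-z) v * of_int (Legendre (- (-1-z)) (int p))) (int p)"
    by (rule part1[OF assms(1,2) z' c'])
  have eqs: "(\<Sum>k = 0..p - 1. (2 * int k + 1) ^ (2 * v) * delannoy k (-1-z)) = (\<Sum>k = 0..p - 1. (-1) ^ k * (2 * int k + 1) ^ (2 * v) * delannoy k z)"
    by (simp add: delannoy_neg algebra_simps)
  have eqn: "Legendre (- (-1-z)) (int p) = Legendre (z+1) (int p)" by simp
  show "rat_cong (of_int (\<Sum>k = 0..p - 1. (-1) ^ k * (2 * int k + 1) ^ (2 * v) * delannoy k z))
                     (ct_seq z v * of_int (Legendre (z + 1) (int p))) (int p)"
    using A unfolding eqs eqn ct_c .
qed


end
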